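(* Let $n\ge 6$ and $k$ be integers with $3\le k\le n-3$. Then for every integer $m\ge 2$, \[ \mathsf{BO}(k,\mathbb{Z}/n\mathbb{Z})\ge \frac{1}{m}\left(\frac{(n/k)^{1/m}-k}{k-1}\right)^{m-2}. \]
   Context: For a positive integer $k$, a set $\{g_1,\dots,g_k\}$ of $k$ distinct elements of a finite abelian group $G$ (written additively) is called $k$-barycentric if $\sum_{i=1}^k g_i = k\,g_j$ for some $1\le j\le k$. The $k$-th barycentric Olson constant $\mathsf{BO}(k,G)$ is the smallest integer $\ell$ such that every subset $A\subseteq G$ with $|A|\ge \ell$ contains a $k$-barycentric subset (so that always $\mathsf{BO}(k,G)\le |G|+1$). *)

theory Defs
  imports Complex_Main "HOL-Algebra.Elementary_Groups" "HOL-Algebra.FiniteProduct"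
begin

text \<open>Groups are HOL-Algebra structures written multiplicatively; for an abelian
group written additively, the sum of a set is finprod and k g is g [^] k.\<close>

definition barycentric :: "('a, 'b) monoid_scheme \<Rightarrow> nat \<Rightarrow> 'a set \<Rightarrow> bool" where
  "barycentric G k S \<longleftrightarrow> S \<subseteq> carrier G \<and> finite S \<and> card S = k \<and>
     (\<exists>g\<in>S. finprod G (\<lambda>x. x) S = g [^]\<^bsub>G\<^esub> k)"

definition BO :: "nat \<Rightarrow> ('a, 'b) monoid_scheme \<Rightarrow> nat" where
  "BO k G = (LEAST l. \<forall>A. A \<subseteq> carrier G \<and> card A \<ge> l \<longrightarrow>
                         (\<exists>B\<subseteq>A. barycentric G k B))"

end

theory Submission
  imports Defs
begin

lemma digits_lt:
  fixes a :: "nat \<Rightarrow> nat"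
  assumes "\<forall>i<m. a i < B"
  shows "(\<Sum>i<m. a i * B^i) < B^m"
  using assms
proof (induction m)
  case 0 then show ?case by simp
next
  case (Suc m)
  have "(\<Sum>i<Suc m. a i * B^i) = (\<Sum>i<m. a i * B^i) + a m * B^m" by simp
  also have "\<dots> < B^m + a m * B^m" using Suc by simp
  also have "\<dots> = (1 + a m) * B^m" by simp
  also have "\<dots> \<le> B * B^m" using Suc.prems by (intro mult_right_mono) auto
  finally show ?case by simp
qed

lemma digits_unique:
  fixes a b :: "nat \<Rightarrow> nat"
  assumes "\<forall>i<m. a i < B" "\<forall>i<m. b i < B"
    "(\<Sum>i<m. a i * B^i) = (\<Sum>i<m. b i * B^i)"
  shows "\<forall>i<m. a i = b i"
  using assms
proof (induction m)
  case 0 then show ?case by simp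
next
  case (Suc m)
  have Bp: "B > 0" using Suc.prems(1) by auto
  define sa where "sa = (\<Sum>i<m. a i * B^i)"
  define sb where "sb = (\<Sum>i<m. b i * B^i)"
  have la: "sa < B^m" unfolding sa_def using Suc.prems(1) by (intro digits_lt) auto
  have lb: "sb < B^m" unfolding sb_def using Suc.prems(2) by (intro digits_lt) auto
  have eq: "sa + a m * B^m = sb + b m * B^m" using Suc.prems(3) by (simp add: sa_def sb_def)
  have pB: "B^m > 0" using Bp by simp
  have "(sa + a m * B^m) div B^m = a m" using la pB by simp
  moreover have "(sb + b m * B^m) div B^m = b m" using lb pB by simp
  ultimately have am: "a m = b m" using eq by simp
  have "(sa + a m * B^m) mod B^m = sa" using la pB by simp
  moreover have "(sb + b m * B^m) mod B^m = sb" using lb pB by simp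
  ultimately have "sa = sb" using eq by simp
  then have "\<forall>i<m. a i = b i" using Suc by (simp add: sa_def sb_def)
  then show ?case using am by (auto simp: less_Suc_eq)
qed

lemma finprod_mod:
  assumes "finite S" "S \<subseteq> carrier (integer_mod_group n)"
  shows "finprod (integer_mod_group n) (\<lambda>x. x) S = (\<Sum>S) mod int n"
  using assms
proof (induction S rule: finite_induct)
  case empty
  show ?case
    using comm_monoid.finprod_empty[OF comm_group.axioms(1)[OF abelian_integer_mod_group]] by simp
next
  case (insert x F)
  have "finprod (integer_mod_group n) (\<lambda>x. x) (insert x F)
      = (x + finprod (integer_mod_group n) (\<lambda>x. x) F) mod int n"
    using insert comm_monoid.finprod_insert[OF comm_group.axioms(1)[OF abelian_integer_mod_group],
        of F x "\<lambda>x. x" n]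
    by (auto simp: Pi_def)
  also have "\<dots> = (x + \<Sum>F) mod int n" using insert by (simp add: mod_add_right_eq)
  finally show ?case using insert by simp
qed

lemma BO_gt:
  assumes "A \<subseteq> carrier (integer_mod_group n)" "n > 0"
    "\<forall>S\<subseteq>A. \<not> barycentric (integer_mod_group n) k S"
  shows "card A < BO k (integer_mod_group n)"
proof -
  let ?P = "\<lambda>l. \<forall>A. A \<subseteq> carrier (integer_mod_group n) \<and> card A \<ge> l \<longrightarrow>
                         (\<exists>B\<subseteq>A. barycentric (integer_mod_group n) k B)"
  have "?P (n+1)"
  proof (intro allI impI)
    fix A' assume h: "A' \<subseteq> carrier (integer_mod_group n) \<and> n + 1 \<le> card A'"
    have "card A' \<le> card {0..<int n}" using h assms(2)
      by (intro card_mono) (auto simp: carrier_integer_mod_group)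
    then show "\<exists>B\<subseteq>A'. barycentric (integer_mod_group n) k B" using h by simp
  qed
  then have P: "?P (BO k (integer_mod_group n))" unfolding BO_def by (rule LeastI)
  show ?thesis
  proof (rule ccontr)
    assume "\<not> ?thesis"
    then show False using P assms(1,3) by auto
  qed
qed


lemma pigeon:
  fixes V :: "'a set" and q :: "'a \<Rightarrow> nat"
  assumes "finite V" "\<forall>v\<in>V. q v \<le> M"
  shows "\<exists>r. card V \<le> card {v\<in>V. q v = r} * (M+1)"
proof -
  define R where "R = {..M}"
  define c where "c r = card {v\<in>V. q v = r}" for r
  have fR: "finite R" "R \<noteq> {}" by (auto simp: R_def)
  have "Max (c ` R) \<in> c ` R" using fR by (intro Max_in) auto
  then obtain r where r: "r \<in> R" "c r = Max (c ` R)" by auto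
  have "V \<subseteq> (\<Union>r\<in>R. {v\<in>V. q v = r})" using assms(2) by (auto simp: R_def)
  then have "card V \<le> card (\<Union>r\<in>R. {v\<in>V. q v = r})"
    using assms(1) fR by (intro card_mono) auto
  also have "\<dots> \<le> (\<Sum>r\<in>R. c r)" unfolding c_def by (rule card_UN_le[OF fR(1)])
  also have "\<dots> \<le> card R * c r"
  proof -
    have "\<forall>r'\<in>R. c r' \<le> c r" using r fR by auto
    then show ?thesis using sum_bounded_above[of R c "c r"] by simp
  qed
  also have "card R = M + 1" by (simp add: R_def)
  finally show ?thesis by (auto simp: c_def mult.commute)
qed

lemma constr:
  fixes n k B d m :: nat
  assumes k3: "k \<ge> 3" and kB: "k * B^m \<le> n" and dB: "(k-1)*(d-1) < B" and d1: "d \<ge> 1"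
  shows "\<exists>A. A \<subseteq> carrier (integer_mod_group n) \<and> (\<forall>S\<subseteq>A. \<not> barycentric (integer_mod_group n) k S)
          \<and> d^m \<le> card A * (m*(d-1)^2+1)"
proof -
  define V where "V = PiE {..<m} (\<lambda>_. {..<d})"
  define N where "N v = (\<Sum>i<m. v i * B^i)" for v :: "nat \<Rightarrow> nat"
  define q where "q v = (\<Sum>i<m. (v i)^2)" for v :: "nat \<Rightarrow> nat"
  have finV: "finite V" by (simp add: V_def finite_PiE)
  have cardV: "card V = d^m" by (simp add: V_def card_PiE)
  have vd: "v i < d" if "v \<in> V" "i < m" for v i using that by (auto simp: V_def PiE_def Pi_def)
  have k1: "k - 1 \<ge> 1" using k3 by simp
  have "d - 1 \<le> (k-1)*(d-1)" using k1 by simp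
  then have vB: "v i < B" if "v \<in> V" "i < m" for v i using vd[OF that] dB by linarith
  have qM: "q v \<le> m*(d-1)^2" if "v \<in> V" for v
  proof -
    have "v i \<le> d - 1" if "i < m" for i
    proof -
      have "v i < d" using vd \<open>v \<in> V\<close> that by auto
      then show ?thesis by simp
    qed
    then have "q v \<le> (\<Sum>i<m. (d-1)^2)" unfolding q_def
      by (intro sum_mono power_mono) auto
    then show ?thesis by simp
  qed
  have NB: "N v < B^m" if "v \<in> V" for v unfolding N_def using vB[OF that] by (intro digits_lt) auto
  have injN: "inj_on N V"
  proof (rule inj_onI)
    fix u v assume uv: "u \<in> V" "v \<in> V" "N u = N v"
    then have "\<forall>i<m. u i = v i" unfolding N_def using vB by (intro digits_unique) auto
    then show "u = v" using uv(1,2) unfolding V_def by (intro PiE_ext) auto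
  qed
  obtain r where r: "card V \<le> card {v\<in>V. q v = r} * (m*(d-1)^2+1)"
    using pigeon[OF finV, of q "m*(d-1)^2"] qM by auto
  define F where "F = {v\<in>V. q v = r}"
  define h where "h v = int (N v)" for v
  define A where "A = h ` F"
  have FV: "F \<subseteq> V" by (auto simp: F_def)
  have injh: "inj_on h V" using injN by (auto simp: inj_on_def h_def)
  have cardA: "card A = card F" unfolding A_def using inj_on_subset[OF injh FV] by (rule card_image)
  have npos: "n > 0"
  proof -
    have "B > 0" using dB by simp
    then have "k * B^m > 0" using k3 by simp
    then show ?thesis using kB by (meson less_le_trans)
  qed
  have Bk: "B^m \<le> n" using kB k3 by (metis le_trans mult_le_mono1 mult_1 one_le_numeral le_trans[of 1 3 k]) 
  have Acar: "A \<subseteq> carrier (integer_mod_group n)"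
    using npos NB FV Bk by (force simp: A_def h_def carrier_integer_mod_group)
  have nobar: "\<not> barycentric (integer_mod_group n) k S" if SA: "S \<subseteq> A" for S
  proof
    assume bar: "barycentric (integer_mod_group n) k S"
    then have Sc: "S \<subseteq> carrier (integer_mod_group n)" and fS: "finite S" and cS: "card S = k"
      and ex: "\<exists>g\<in>S. finprod (integer_mod_group n) (\<lambda>x. x) S = g [^]\<^bsub>integer_mod_group n\<^esub> k"
      unfolding barycentric_def by auto
    define F' where "F' = {v\<in>F. h v \<in> S}"
    have F'F: "F' \<subseteq> F" by (auto simp: F'_def)
    have F'V: "F' \<subseteq> V" using F'F FV by auto
    have finF': "finite F'" using finV F'V finite_subset by blast
    have injF': "inj_on h F'" using inj_on_subset[OF injh F'V] .
    have SF': "S = h ` F'" using SA by (auto simp: F'_def A_def)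
    have cF': "card F' = k" using cS SF' card_image[OF injF'] by simp
    obtain g where g: "g \<in> S" "finprod (integer_mod_group n) (\<lambda>x. x) S = g [^]\<^bsub>integer_mod_group n\<^esub> k"
      using ex by auto
    obtain w where w: "w \<in> F'" "g = h w" using g(1) SF' by auto
    have wV: "w \<in> V" using w F'V by auto
    have "(\<Sum>S) mod int n = (int k * h w) mod int n"
      using g(2) w(2) finprod_mod[OF fS Sc] by simp
    moreover have "\<Sum>S = (\<Sum>v\<in>F'. h v)" using SF' sum.reindex[OF injF'] by simp
    ultimately have eqm: "int (\<Sum>v\<in>F'. N v) mod int n = int (k * N w) mod int n"
      by (simp add: h_def)
    have "(\<Sum>v\<in>F'. N v) < (\<Sum>v\<in>F'. B^m)"
      using finF' w(1) NB F'V by (intro sum_strict_mono) auto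
    then have l1: "(\<Sum>v\<in>F'. N v) < n" using cF' kB by simp
    have "k * N w < k * B^m" using NB[OF wV] k3 by simp
    then have l2: "k * N w < n" using kB by (meson less_le_trans)
    have sumeq: "(\<Sum>v\<in>F'. N v) = k * N w"
      using eqm l1 l2 by (metis mod_less of_nat_less_iff of_nat_eq_iff zmod_int)
    define F'' where "F'' = F' - {w}"
    have finF'': "finite F''" using finF' by (simp add: F''_def)
    have cF'': "card F'' = k - 1" using cF' w(1) finF' by (simp add: F''_def)
    have F''V: "F'' \<subseteq> V" using F'V by (auto simp: F''_def)
    have "(\<Sum>v\<in>F'. N v) = N w + (\<Sum>v\<in>F''. N v)"
      unfolding F''_def using sum.remove[OF finF' w(1)] by simp
    then have s2: "(\<Sum>v\<in>F''. N v) = (k-1) * N w" using sumeq k3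
      by (simp add: diff_mult_distrib)
    have lin1: "(\<Sum>v\<in>F''. N v) = (\<Sum>i<m. (\<Sum>v\<in>F''. v i) * B^i)"
      unfolding N_def by (simp add: sum_distrib_right sum.swap[of _ F''])
    have lin2: "(k-1) * N w = (\<Sum>i<m. ((k-1) * w i) * B^i)"
      unfolding N_def by (simp add: sum_distrib_left mult.assoc)
    have dig1: "\<forall>i<m. (\<Sum>v\<in>F''. v i) < B"
    proof (intro allI impI)
      fix i assume i: "i < m"
      have "v i \<le> d - 1" if "v \<in> F''" for v
      proof -
        have "v i < d" using vd F''V i that by auto
        then show ?thesis by simp
      qed
      then have "(\<Sum>v\<in>F''. v i) \<le> card F'' * (d-1)"
        using sum_bounded_above[of F'' "\<lambda>v. v i" "d-1"] by simp
      then show "(\<Sum>v\<in>F''. v i) < B" using cF'' dB by simp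
    qed
    have dig2: "\<forall>i<m. (k-1) * w i < B"
    proof (intro allI impI)
      fix i assume i: "i < m"
      have "(k-1) * w i \<le> (k-1)*(d-1)" using vd[OF wV i] by (intro mult_left_mono) auto
      then show "(k-1) * w i < B" using dB by (meson le_less_trans)
    qed
    have coord: "\<forall>i<m. (\<Sum>v\<in>F''. v i) = (k-1) * w i"
      using digits_unique[OF dig1 dig2] s2 lin1 lin2 by simp
    have qF'': "q v = r" if "v \<in> F''" for v using that F'F by (auto simp: F''_def F_def)
    have qw: "q w = r" using w(1) F'F by (auto simp: F_def)
    define D where "D = (\<Sum>v\<in>F''. \<Sum>i<m. (int (v i) - int (w i))^2)"
    have e1: "(\<Sum>v\<in>F''. \<Sum>i<m. int (v i)^2) = int (k-1) * int r"
    proof -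
      have "(\<Sum>v\<in>F''. \<Sum>i<m. int (v i)^2) = (\<Sum>v\<in>F''. int (q v))" by (simp add: q_def)
      also have "\<dots> = (\<Sum>v\<in>F''. int r)" using qF'' by simp
      finally show ?thesis using cF'' by simp
    qed
    have e2: "(\<Sum>v\<in>F''. \<Sum>i<m. int (v i) * int (w i)) = int (k-1) * int r"
    proof -
      have "(\<Sum>v\<in>F''. \<Sum>i<m. int (v i) * int (w i)) = (\<Sum>i<m. (\<Sum>v\<in>F''. int (v i)) * int (w i))"
        by (simp add: sum_distrib_right sum.swap[of _ F''])
      also have "\<dots> = (\<Sum>i<m. int ((k-1) * w i) * int (w i))"
        using coord by (intro sum.cong refl) (metis lessThan_iff of_nat_sum)
      also have "\<dots> = int (k-1) * int (q w)" by (simp add: q_def sum_distrib_left power2_eq_square mult.assoc)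
      finally show ?thesis using qw by simp
    qed
    have e3: "(\<Sum>v\<in>F''. \<Sum>i<m. int (w i)^2) = int (k-1) * int r"
    proof -
      have "int (q w) = (\<Sum>i<m. int (w i)^2)" by (simp add: q_def)
      then show ?thesis using cF'' qw by simp
    qed
    have "D = (\<Sum>v\<in>F''. \<Sum>i<m. int (v i)^2) - 2 * (\<Sum>v\<in>F''. \<Sum>i<m. int (v i) * int (w i))
              + (\<Sum>v\<in>F''. \<Sum>i<m. int (w i)^2)"
      unfolding D_def by (simp add: power2_diff sum.distrib sum_subtractf sum_distrib_left mult.assoc)
    then have D0: "D = 0" using e1 e2 e3 by simp
    have "F'' \<noteq> {}" using cF'' k3 by auto
    then obtain v where v: "v \<in> F''" by auto
    have "\<forall>v\<in>F''. (\<Sum>i<m. (int (v i) - int (w i))^2) = 0"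
      using D0 finF'' unfolding D_def by (subst sum_nonneg_eq_0_iff[symmetric]) (auto intro: sum_nonneg)
    then have "(\<Sum>i<m. (int (v i) - int (w i))^2) = 0" using v by auto
    then have "\<forall>i\<in>{..<m}. (int (v i) - int (w i))^2 = 0" by (subst sum_nonneg_eq_0_iff[symmetric]) auto
    then have "v = w" using v F''V wV unfolding V_def by (intro PiE_ext) auto
    then show False using v by (simp add: F''_def)
  qed
  have "d^m \<le> card A * (m*(d-1)^2+1)" using r cardA cardV by (simp add: F_def)
  then show ?thesis using Acar nobar by (intro exI[of _ A]) auto
qed


theorem mainTheorem10:
  fixes n k m :: nat
  assumes "n \<ge> 6" and "3 \<le> k" and "k + 3 \<le> n" and "m \<ge> 2"
  shows "real (BO k (integer_mod_group n)) \<ge>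
     (1 / real m) * (((real n / real k) powr (1 / real m) - real k) / (real k - 1)) ^ (m - 2)"
proof -
  define x where "x = (real n / real k) powr (1 / real m)"
  have nk1: "real n / real k \<ge> 1" using assms by simp
  have x1: "x \<ge> 1" unfolding x_def using nk1 by (intro ge_one_powr_ge_zero) auto
  have xm: "x ^ m = real n / real k"
  proof -
    have "x ^ m = x powr real m" using x1 by (simp add: powr_realpow)
    also have "\<dots> = (real n / real k) powr (1 / real m * real m)" unfolding x_def by (simp add: powr_powr)
    also have "\<dots> = real n / real k" using assms(4) nk1 by simp
    finally show ?thesis .
  qed
  define B where "B = nat \<lfloor>x\<rfloor>"
  have Bx: "real B \<le> x" unfolding B_def using x1 by (intro of_nat_floor) auto
  have xB: "x < real B + 1" unfolding B_def using x1 by linarith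
  have B1: "B \<ge> 1" unfolding B_def using x1 by linarith
  have "real B ^ m \<le> x ^ m" using Bx by (intro power_mono) auto
  then have "real k * real B ^ m \<le> real n" using xm assms(2) by (simp add: field_simps)
  then have kB: "k * B^m \<le> n" by (metis of_nat_le_iff of_nat_mult of_nat_power)
  define d where "d = (B - 1) div (k - 1) + 1"
  have d1: "d \<ge> 1" by (simp add: d_def)
  have "(k-1)*(d-1) \<le> B - 1" by (simp add: d_def)
  then have dB: "(k-1)*(d-1) < B" using B1 by linarith
  have kd: "B \<le> (k-1)*d"
  proof -
    have "B - 1 = (k-1) * ((B-1) div (k-1)) + (B-1) mod (k-1)" by simp
    moreover have "(B-1) mod (k-1) < k - 1" using assms(2) by simp
    ultimately have "B - 1 < (k-1) * d" by (simp add: d_def algebra_simps)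
    then show ?thesis by simp
  qed
  obtain A where A: "A \<subseteq> carrier (integer_mod_group n)"
    "\<forall>S\<subseteq>A. \<not> barycentric (integer_mod_group n) k S" "d^m \<le> card A * (m*(d-1)^2+1)"
    using constr[OF assms(2) kB dB d1] by blast
  have npos: "n > 0" using assms by simp
  have BOA: "card A < BO k (integer_mod_group n)" using BO_gt[OF A(1) npos A(2)] .
  have "m*(d-1)^2+1 \<le> m * d^2"
  proof -
    have "(d-1)^2 + 1 \<le> d^2" using d1 by (cases d) (auto simp: power2_eq_square)
    then have "m*((d-1)^2 + 1) \<le> m*d^2" by (rule mult_le_mono2)
    moreover have "m*(d-1)^2 + 1 \<le> m*((d-1)^2 + 1)" using assms(4) by (simp add: algebra_simps)
    ultimately show ?thesis by linarith
  qed
  then have "d^m \<le> card A * (m * d^2)" using A(3) by (meson le_trans mult_le_mono2)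
  moreover have "d^m = d^(m-2) * d^2"
  proof -
    have "m = (m-2) + 2" using assms(4) by simp
    then show ?thesis by (metis power_add)
  qed
  ultimately have "d^(m-2) * d^2 \<le> card A * m * d^2" by (simp add: mult.assoc)
  then have "d^(m-2) \<le> card A * m" using d1 by simp
  then have c1: "real d ^ (m-2) / real m \<le> real (card A)" using assms(4)
    by (simp add: field_simps) (metis of_nat_le_iff of_nat_mult of_nat_power)
  define b where "b = (x - real k) / (real k - 1)"
  have k1: "real k - 1 > 0" using assms(2) by simp
  have "x - real k \<le> (real k - 1) * real d"
  proof -
    have "real B \<le> real (k-1) * real d" using kd by (metis of_nat_le_iff of_nat_mult)
    then show ?thesis using xB assms(2) by (simp add: of_nat_diff)
  qed
  then have bd: "b \<le> real d" unfolding b_def using k1 by (simp add: field_simps)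
  have "- (real k - 1) \<le> x - real k" using x1 by simp
  then have bm: "-1 \<le> b" unfolding b_def using k1 by (simp add: field_simps)
  have "\<bar>b\<bar> \<le> real d" using bd bm d1 by auto
  then have "\<bar>b\<bar> ^ (m-2) \<le> real d ^ (m-2)" by (intro power_mono) auto
  moreover have "b ^ (m-2) \<le> \<bar>b\<bar> ^ (m-2)" by (metis abs_ge_self power_abs)
  ultimately have "b ^ (m-2) \<le> real d ^ (m-2)" by linarith
  then have "(1 / real m) * b ^ (m-2) \<le> real d ^ (m-2) / real m" using assms(4)
    by (simp add: divide_right_mono)
  also have "\<dots> \<le> real (card A)" using c1 .
  also have "\<dots> \<le> real (BO k (integer_mod_group n))" using BOA by simp
  finally show ?thesis unfolding b_def x_def .
qed

end
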